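(* If a group $G$ has a normal subgroup $N$ that is a free group and $G/N$ is amenable, then $G$ is residually amenable.
   Context: Groups are discrete. A group is residually amenable if every non-trivial element has non-trivial image under some surjective homomorphism onto an amenable group. *)

theory Defs
  imports "HOL-Algebra.Algebra"
begin

definition amenable :: "('a, 'b) monoid_scheme \<Rightarrow> bool" where
  "amenable H \<longleftrightarrow> group H \<and>
     (\<exists>\<mu> :: 'a set \<Rightarrow> real.
        \<mu> (carrier H) = 1 \<and>
        (\<forall>A. A \<subseteq> carrier H \<longrightarrow> \<mu> A \<ge> 0) \<and>
        (\<forall>A B. A \<subseteq> carrier H \<longrightarrow> B \<subseteq> carrier H \<longrightarrow> A \<inter> B = {} \<longrightarrow>
               \<mu> (A \<union> B) = \<mu> A + \<mu> B) \<and>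
        (\<forall>g A. g \<in> carrier H \<longrightarrow> A \<subseteq> carrier H \<longrightarrow> \<mu> (g <#\<^bsub>H\<^esub> A) = \<mu> A))"

definition eval_word :: "('a, 'b) monoid_scheme \<Rightarrow> (bool \<times> 'a) list \<Rightarrow> 'a" where
  "eval_word G ws = foldr (\<lambda>(b, x) acc. (if b then x else inv\<^bsub>G\<^esub> x) \<otimes>\<^bsub>G\<^esub> acc) ws \<one>\<^bsub>G\<^esub>"

definition reduced_word :: "(bool \<times> 'a) list \<Rightarrow> bool" where
  "reduced_word ws \<longleftrightarrow>
     (\<forall>i. Suc i < length ws \<longrightarrow>
        \<not> (snd (ws ! i) = snd (ws ! Suc i) \<and> fst (ws ! i) \<noteq> fst (ws ! Suc i)))"

definition free_group_on :: "('a, 'b) monoid_scheme \<Rightarrow> 'a set \<Rightarrow> bool" where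
  "free_group_on G B \<longleftrightarrow> group G \<and> B \<subseteq> carrier G \<and>
     generate G B = carrier G \<and>
     (\<forall>ws. ws \<noteq> [] \<longrightarrow> set (map snd ws) \<subseteq> B \<longrightarrow> reduced_word ws \<longrightarrow>
            eval_word G ws \<noteq> \<one>\<^bsub>G\<^esub>)"

definition is_free_group :: "('a, 'b) monoid_scheme \<Rightarrow> bool" where
  "is_free_group G \<longleftrightarrow> (\<exists>B. free_group_on G B)"

text \<open>Target groups are taken
  with carrier type 'a set, which suffices since every quotient G/K has such
  a carrier.\<close>
definition residually_amenable :: "('a, 'b) monoid_scheme \<Rightarrow> bool" where
  "residually_amenable G \<longleftrightarrow>
     (\<forall>g \<in> carrier G. g \<noteq> \<one>\<^bsub>G\<^esub> \<longrightarrow>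
        (\<exists>(H :: 'a set monoid) h. group H \<and> amenable H \<and> h \<in> hom G H \<and>
            h ` carrier G = carrier H \<and> h g \<noteq> \<one>\<^bsub>H\<^esub>))"

end

theory Submission imports Defs "HOL-Analysis.Analysis" begin


definition mapw :: "('a \<Rightarrow> 'c) \<Rightarrow> (bool \<times> 'a) list \<Rightarrow> (bool \<times> 'c) list" where
  "mapw f ws = map (\<lambda>(b,x). (b, f x)) ws"

definition winv :: "(bool \<times> 'a) list \<Rightarrow> (bool \<times> 'a) list" where
  "winv ws = rev (map (\<lambda>(b,x). (\<not>b, x)) ws)"

lemma eval_word_Nil[simp]: "eval_word G [] = \<one>\<^bsub>G\<^esub>"
  by (simp add: eval_word_def)

lemma eval_word_Cons[simp]: "eval_word G ((b,x)#ws) = (if b then x else inv\<^bsub>G\<^esub> x) \<otimes>\<^bsub>G\<^esub> eval_word G ws"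
  by (simp add: eval_word_def)

lemma mapw_simps[simp]: "mapw f [] = []" "mapw f ((b,x)#ws) = (b, f x) # mapw f ws"
  "mapw f (u @ v) = mapw f u @ mapw f v" "length (mapw f ws) = length ws"
  by (auto simp: mapw_def)

lemma set_mapw: "set (map snd (mapw f ws)) = f ` set (map snd ws)"
  by (induction ws) (auto simp: mapw_def)

lemma winv_simps[simp]: "winv [] = []" "winv ((b,x)#ws) = winv ws @ [(\<not>b,x)]"
  "winv (u @ v) = winv v @ winv u"
  by (auto simp: winv_def)

lemma set_winv[simp]: "snd ` set (winv ws) = snd ` set ws"
  by (simp add: winv_def image_image case_prod_beta)

lemma mapw_winv: "mapw f (winv ws) = winv (mapw f ws)"
  by (induction ws) auto

context group begin

lemma eval_carrier[intro]: "set (map snd ws) \<subseteq> carrier G \<Longrightarrow> eval_word G ws \<in> carrier G"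
  by (induction ws) auto

lemma eval_append: "set (map snd u) \<subseteq> carrier G \<Longrightarrow> set (map snd v) \<subseteq> carrier G \<Longrightarrow>
   eval_word G (u @ v) = eval_word G u \<otimes> eval_word G v"
  by (induction u) (auto simp: m_assoc eval_carrier)

lemma eval_winv: "set (map snd ws) \<subseteq> carrier G \<Longrightarrow> eval_word G (winv ws) = inv (eval_word G ws)"
proof (induction ws)
  case Nil then show ?case by simp
next
  case (Cons a ws)
  obtain b x where a: "a = (b,x)" by force
  have x: "x \<in> carrier G" and ws: "set (map snd ws) \<subseteq> carrier G" using Cons.prems a by auto
  have "eval_word G (winv (a#ws)) = eval_word G (winv ws) \<otimes> eval_word G [(\<not>b,x)]"
    using a x ws eval_append[of "winv ws" "[(\<not>b,x)]"] by (simp del: eval_word_Cons)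
  also have "\<dots> = inv (eval_word G ws) \<otimes> (if b then inv x else x)"
    using Cons.IH ws x by auto
  also have "\<dots> = inv ((if b then x else inv x) \<otimes> eval_word G ws)"
    using x ws by (auto simp: inv_mult_group eval_carrier)
  finally show ?case using a by simp
qed

lemma eval_cancel: assumes a: "set (map snd p) \<subseteq> carrier G" "set (map snd s) \<subseteq> carrier G" "x \<in> carrier G"
  shows "eval_word G (p @ (b,x) # (\<not>b,x) # s) = eval_word G (p @ s)"
proof -
  have "eval_word G ((b,x) # (\<not>b,x) # s) = eval_word G s"
    using a by (auto simp: m_assoc[symmetric] eval_carrier)
  then show ?thesis using a by (simp add: eval_append del: eval_word_Cons)
qed

lemma eval_generate: assumes "B \<subseteq> carrier G" "y \<in> generate G B"
  shows "\<exists>ws. set (map snd ws) \<subseteq> B \<and> eval_word G ws = y"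
  using assms(2)
proof (induction rule: generate.induct)
  case one then show ?case by (intro exI[of _ "[]"]) auto
next
  case (incl h) then show ?case using assms(1) by (intro exI[of _ "[(True,h)]"]) auto
next
  case (inv h) then show ?case using assms(1) by (intro exI[of _ "[(False,h)]"]) auto
next
  case (eng h1 h2)
  then obtain u v where "set (map snd u) \<subseteq> B" "eval_word G u = h1" "set (map snd v) \<subseteq> B" "eval_word G v = h2" by blast
  then show ?case using assms(1) by (intro exI[of _ "u @ v"]) (auto simp: eval_append)
qed

lemma not_reduced_split: "\<not> reduced_word ws \<Longrightarrow> \<exists>p b x s. ws = p @ (b,x) # (\<not>b,x) # s"
proof -
  assume "\<not> reduced_word ws"
  then obtain i where i: "Suc i < length ws" "snd (ws ! i) = snd (ws ! Suc i)" "fst (ws ! i) \<noteq> fst (ws ! Suc i)"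
    unfolding reduced_word_def by blast
  have "ws = take i ws @ ws ! i # ws ! Suc i # drop (Suc (Suc i)) ws"
    using i(1) by (metis Cons_nth_drop_Suc Suc_lessD append_take_drop_id)
  moreover have "ws ! Suc i = (\<not> fst (ws ! i), snd (ws ! i))" using i by (cases "ws ! Suc i") auto
  ultimately show ?thesis by (metis prod.collapse)
qed

lemma reduce_exists: "set (map snd ws) \<subseteq> B \<Longrightarrow> B \<subseteq> carrier G \<Longrightarrow>
   \<exists>ws'. set (map snd ws') \<subseteq> B \<and> reduced_word ws' \<and> eval_word G ws' = eval_word G ws"
proof (induction "length ws" arbitrary: ws rule: less_induct)
  case less
  show ?case
  proof (cases "reduced_word ws")
    case True then show ?thesis using less.prems by blast
  next
    case False
    then obtain p b x s where ws: "ws = p @ (b,x) # (\<not>b,x) # s" using not_reduced_split by blast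
    have "eval_word G ws = eval_word G (p @ s)"
      unfolding ws by (rule eval_cancel) (use less.prems ws in auto)
    moreover have "\<exists>ws'. set (map snd ws') \<subseteq> B \<and> reduced_word ws' \<and> eval_word G ws' = eval_word G (p@s)"
      using less.prems ws by (intro less.hyps) auto
    ultimately show ?thesis by metis
  qed
qed

end



lemma free_triv:
  assumes fr: "free_group_on F B" and H: "group H" and f: "f \<in> B \<rightarrow> carrier H"
    and ws: "set (map snd ws) \<subseteq> B" "eval_word F ws = \<one>\<^bsub>F\<^esub>"
  shows "eval_word H (mapw f ws) = \<one>\<^bsub>H\<^esub>"
  using ws
proof (induction "length ws" arbitrary: ws rule: less_induct)
  case less
  have F: "group F" and BF: "B \<subseteq> carrier F" using fr by (auto simp: free_group_on_def)
  show ?case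
  proof (cases "ws = []")
    case True then show ?thesis by simp
  next
    case False
    then have "\<not> reduced_word ws" using fr less.prems unfolding free_group_on_def by blast
    then obtain p b x s where w: "ws = p @ (b,x) # (\<not>b,x) # s" using group.not_reduced_split[OF F] by blast
    have ps: "set (map snd (p @ s)) \<subseteq> B" "x \<in> B" using less.prems w by auto
    have "eval_word F (p @ s) = \<one>\<^bsub>F\<^esub>"
      using less.prems(2) unfolding w by (subst (asm) group.eval_cancel[OF F]) (use ps BF in auto)
    then have IH: "eval_word H (mapw f (p @ s)) = \<one>\<^bsub>H\<^esub>"
      using less.hyps[of "p @ s"] ps w by auto
    have "eval_word H (mapw f ws) = eval_word H (mapw f p @ (b, f x) # (\<not>b, f x) # mapw f s)"
      using w by simp
    also have "\<dots> = eval_word H (mapw f (p @ s))"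
      using ps f by (subst group.eval_cancel[OF H]) (auto simp: set_mapw[simplified])
    finally show ?thesis using IH by simp
  qed
qed

definition freeext :: "('a,'b) monoid_scheme \<Rightarrow> 'a set \<Rightarrow> ('c,'d) monoid_scheme \<Rightarrow> ('a \<Rightarrow> 'c) \<Rightarrow> 'a \<Rightarrow> 'c" where
 "freeext F B H f y = eval_word H (mapw f (SOME ws. set (map snd ws) \<subseteq> B \<and> eval_word F ws = y))"

lemma mapw_carrier: "f \<in> B \<rightarrow> C \<Longrightarrow> set (map snd ws) \<subseteq> B \<Longrightarrow> set (map snd (mapw f ws)) \<subseteq> C"
  by (fastforce simp: mapw_def)

lemma freeext_eval:
  assumes fr: "free_group_on F B" and H: "group H" and f: "f \<in> B \<rightarrow> carrier H"
    and ws: "set (map snd ws) \<subseteq> B"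
  shows "freeext F B H f (eval_word F ws) = eval_word H (mapw f ws)"
proof -
  have F: "group F" and BF: "B \<subseteq> carrier F" using fr by (auto simp: free_group_on_def)
  define ws0 where "ws0 = (SOME ws'. set (map snd ws') \<subseteq> B \<and> eval_word F ws' = eval_word F ws)"
  have w0': "set (map snd ws0) \<subseteq> B \<and> eval_word F ws0 = eval_word F ws"
    unfolding ws0_def by (rule someI[of _ ws]) (use ws in auto)
  then have w0: "set (map snd ws0) \<subseteq> B" "eval_word F ws0 = eval_word F ws" by auto
  have "eval_word F (ws0 @ winv ws) = eval_word F ws0 \<otimes>\<^bsub>F\<^esub> inv\<^bsub>F\<^esub> eval_word F ws"
    using w0 ws BF by (simp add: group.eval_append[OF F] group.eval_winv[OF F] del: eval_word_Cons)
  also have "\<dots> = \<one>\<^bsub>F\<^esub>" using w0 ws BF by (simp add: group.r_inv[OF F] group.eval_carrier[OF F])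
  finally have "eval_word H (mapw f (ws0 @ winv ws)) = \<one>\<^bsub>H\<^esub>"
    using w0 ws by (intro free_triv[OF fr H f]) auto
  moreover have c0: "set (map snd (mapw f ws0)) \<subseteq> carrier H" "set (map snd (mapw f ws)) \<subseteq> carrier H"
    using w0 ws f mapw_carrier by blast+
  ultimately have "eval_word H (mapw f ws0) \<otimes>\<^bsub>H\<^esub> inv\<^bsub>H\<^esub> eval_word H (mapw f ws) = \<one>\<^bsub>H\<^esub>"
    by (simp add: mapw_winv group.eval_append[OF H] group.eval_winv[OF H] del: eval_word_Cons)
  then have "eval_word H (mapw f ws0) = eval_word H (mapw f ws)"
    using c0 by (metis group.eval_carrier[OF H] group.inv_equality group.inv_inv group.inv_closed H)
  then show ?thesis unfolding freeext_def ws0_def[symmetric] by simp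
qed

lemma freeext_hom:
  assumes fr: "free_group_on F B" and H: "group H" and f: "f \<in> B \<rightarrow> carrier H"
  shows "freeext F B H f \<in> hom F H"
proof (rule homI)
  have F: "group F" and BF: "B \<subseteq> carrier F" and gen: "generate F B = carrier F"
    using fr by (auto simp: free_group_on_def)
  have ex: "\<exists>ws. set (map snd ws) \<subseteq> B \<and> eval_word F ws = y" if "y \<in> carrier F" for y
    using group.eval_generate[OF F BF] that gen by auto
  show "freeext F B H f x \<in> carrier H" if "x \<in> carrier F" for x
    using ex[OF that] freeext_eval[OF fr H f] mapw_carrier[OF f] group.eval_carrier[OF H] by metis
  show "freeext F B H f (x \<otimes>\<^bsub>F\<^esub> y) = freeext F B H f x \<otimes>\<^bsub>H\<^esub> freeext F B H f y"
    if xy: "x \<in> carrier F" "y \<in> carrier F" for x y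
  proof -
    obtain u v where u: "set (map snd u) \<subseteq> B" "eval_word F u = x" and v: "set (map snd v) \<subseteq> B" "eval_word F v = y"
      using ex[OF xy(1)] ex[OF xy(2)] by blast
    have "x \<otimes>\<^bsub>F\<^esub> y = eval_word F (u @ v)" using u v BF by (simp add: group.eval_append[OF F] del: eval_word_Cons)
    then have "freeext F B H f (x \<otimes>\<^bsub>F\<^esub> y) = eval_word H (mapw f (u @ v))"
      using u v freeext_eval[OF fr H f, of "u @ v"] by simp
    also have "\<dots> = eval_word H (mapw f u) \<otimes>\<^bsub>H\<^esub> eval_word H (mapw f v)"
      using mapw_carrier[OF f u(1)] mapw_carrier[OF f v(1)]
      by (simp add: group.eval_append[OF H] del: eval_word_Cons)
    finally show ?thesis using u v freeext_eval[OF fr H f u(1)] freeext_eval[OF fr H f v(1)] by simp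
  qed
qed

lemma freeext_basis:
  assumes fr: "free_group_on F B" and H: "group H" and f: "f \<in> B \<rightarrow> carrier H" and b: "b \<in> B"
  shows "freeext F B H f b = f b"
proof -
  have F: "group F" and BF: "B \<subseteq> carrier F" using fr by (auto simp: free_group_on_def)
  have "b = eval_word F [(True, b)]" using b BF by (simp add: monoid.r_one[OF group.is_monoid[OF F]] subsetD)
  then show ?thesis using freeext_eval[OF fr H f, of "[(True,b)]"] b f H by (simp add: monoid.r_one[OF group.is_monoid[OF H]] Pi_iff)
qed



lemma extend_bij:
  assumes "finite S" "D \<subseteq> S" "inj_on p D" "p ` D \<subseteq> S"
  shows "\<exists>\<sigma>\<in>Bij S. \<forall>d\<in>D. \<sigma> d = p d"
proof -
  have fD: "finite D" using assms(1,2) by (rule finite_subset[rotated])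
  have "card (S - D) = card (S - p ` D)"
    using assms fD by (simp add: card_Diff_subset card_image)
  then obtain h where h: "bij_betw h (S - D) (S - p ` D)"
    by (metis finite_same_card_bij finite_Diff assms(1))
  define \<sigma> where "\<sigma> = restrict (\<lambda>x. if x \<in> D then p x else h x) S"
  have e1: "\<forall>x\<in>D. \<sigma> x = p x" using assms(2) by (auto simp: \<sigma>_def)
  have e2: "\<forall>x\<in>S - D. \<sigma> x = h x" by (auto simp: \<sigma>_def)
  have b1: "bij_betw \<sigma> D (p ` D)"
    by (rule bij_betw_cong[THEN iffD2, OF _ inj_on_imp_bij_betw[OF assms(3)]]) (use e1 in auto)
  have b2: "bij_betw \<sigma> (S - D) (S - p ` D)"
    by (rule bij_betw_cong[THEN iffD2, OF _ h]) (use e2 in auto)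
  have "bij_betw \<sigma> (D \<union> (S - D)) (p ` D \<union> (S - p ` D))"
    by (rule bij_betw_combine[OF b1 b2]) blast
  moreover have "D \<union> (S - D) = S" "p ` D \<union> (S - p ` D) = S" using assms(2,4) by blast+
  ultimately have "bij_betw \<sigma> S S" by simp
  moreover have "\<sigma> \<in> extensional S" by (simp add: \<sigma>_def)
  ultimately have "\<sigma> \<in> Bij S" by (simp add: Bij_def)
  then show ?thesis using e1 by blast
qed
lemma BijGroup_mult: "g \<in> Bij S \<Longrightarrow> h \<in> Bij S \<Longrightarrow> g \<otimes>\<^bsub>BijGroup S\<^esub> h = compose S g h"
  by (simp add: BijGroup_def)

lemma BijGroup_one: "\<one>\<^bsub>BijGroup S\<^esub> = (\<lambda>x\<in>S. x)"
  by (simp add: BijGroup_def)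

lemma BijGroup_carrier: "carrier (BijGroup S) = Bij S"
  by (simp add: BijGroup_def)

lemma word_perm:
  assumes red: "reduced_word ws" and ne: "ws \<noteq> []"
  shows "\<exists>f. f \<in> UNIV \<rightarrow> carrier (BijGroup {0..length ws}) \<and>
      eval_word (BijGroup {0..length ws}) (mapw f ws) \<noteq> \<one>\<^bsub>BijGroup {0..length ws}\<^esub>"
proof -
  define L where "L = length ws"
  define S where "S = {0..L}"
  define D1 where "D1 x = {i. \<exists>j<L. ws ! j = (True, x) \<and> i = Suc j}" for x
  define D2 where "D2 x = {i. i < L \<and> ws ! i = (False, x)}" for x
  define p where "p x i = (if i \<in> D1 x then i - 1 else Suc i)" for x i
  have disj: "D1 x \<inter> D2 x = {}" for x
  proof -
    { fix i assume "i \<in> D1 x" "i \<in> D2 x"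
      then obtain j where "j < L" "ws ! j = (True, x)" "i = Suc j" "i < L" "ws ! i = (False, x)"
        unfolding D1_def D2_def by blast
      then have False using red unfolding reduced_word_def L_def by (metis fst_conv snd_conv) }
    then show ?thesis by blast
  qed
  have ex: "\<exists>\<sigma>\<in>Bij S. \<forall>d\<in>D1 x \<union> D2 x. \<sigma> d = p x d" for x
  proof (rule extend_bij)
    show "finite S" by (simp add: S_def)
    show "D1 x \<union> D2 x \<subseteq> S" by (auto simp: D1_def D2_def S_def)
    show "p x ` (D1 x \<union> D2 x) \<subseteq> S" by (auto simp: D1_def D2_def S_def p_def)
    show "inj_on (p x) (D1 x \<union> D2 x)"
    proof (rule inj_onI)
      fix a b assume ab: "a \<in> D1 x \<union> D2 x" "b \<in> D1 x \<union> D2 x" "p x a = p x b"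
      have no: False if na: "a \<in> D1 x" "b \<in> D2 x" "p x a = p x b" for a b
      proof -
        have "b \<notin> D1 x" using disj na by blast
        then have "a - 1 = Suc b" using na by (simp add: p_def)
        moreover obtain j where "j < L" "ws ! j = (True, x)" "a = Suc j" using na unfolding D1_def by blast
        ultimately have "j = Suc b" "b < L" "ws ! b = (False, x)" using na(2) unfolding D2_def by auto
        then show False using red \<open>j < L\<close> \<open>ws ! j = (True, x)\<close> unfolding reduced_word_def L_def
          by (metis fst_conv snd_conv)
      qed
      show "a = b"
      proof (cases "a \<in> D1 x")
        case True
        show ?thesis
        proof (cases "b \<in> D1 x")
          case True then show ?thesis using \<open>a \<in> D1 x\<close> ab by (auto simp: p_def D1_def)
        next
          case False then show ?thesis using no[of a b] True ab by auto
        qed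
      next
        case False
        show ?thesis
        proof (cases "b \<in> D1 x")
          case True then show ?thesis using no[of b a] False ab by auto
        next
          case F2: False then show ?thesis using False ab by (auto simp: p_def)
        qed
      qed
    qed
  qed
  define f where "f x = (SOME \<sigma>. \<sigma> \<in> Bij S \<and> (\<forall>d\<in>D1 x \<union> D2 x. \<sigma> d = p x d))" for x
  have f: "f x \<in> Bij S" "\<And>d. d \<in> D1 x \<union> D2 x \<Longrightarrow> f x d = p x d" for x
    using someI_ex[OF ex[of x, unfolded Bex_def]] unfolding f_def by blast+
  have grp: "group (BijGroup S)" by (rule group_BijGroup)
  have fc: "f \<in> UNIV \<rightarrow> carrier (BijGroup S)" using f by (simp add: BijGroup_carrier)
  have key: "eval_word (BijGroup S) (mapw f (drop j ws)) L = j" if "j \<le> L" for j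
    using that
  proof (induction "L - j" arbitrary: j)
    case 0 then have "j = L" by simp
    then show ?case by (simp add: L_def BijGroup_one S_def)
  next
    case (Suc k)
    then have jL: "j < L" by simp
    have IH: "eval_word (BijGroup S) (mapw f (drop (Suc j) ws)) L = Suc j"
      using Suc by simp
    obtain b x where bx: "ws ! j = (b, x)" by force
    have dr: "drop j ws = (b, x) # drop (Suc j) ws" using jL bx L_def by (metis Cons_nth_drop_Suc)
    have ec: "eval_word (BijGroup S) (mapw f (drop (Suc j) ws)) \<in> Bij S"
      using group.eval_carrier[OF grp, of "mapw f (drop (Suc j) ws)"] mapw_carrier[OF fc]
      by (simp add: BijGroup_carrier)
    have LS: "L \<in> S" "Suc j \<in> S" "j \<in> S" using jL by (auto simp: S_def)
    show ?case
    proof (cases b)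
      case True
      have "Suc j \<in> D1 x" using jL bx True by (auto simp: D1_def)
      then have "f x (Suc j) = j" using f(2)[of "Suc j" x] by (simp add: p_def)
      then show ?thesis using dr True ec f(1)[of x] IH LS
        by (simp add: BijGroup_mult compose_def)
    next
      case False
      have "j \<in> D2 x" using jL bx False by (auto simp: D2_def)
      then have "j \<notin> D1 x" using disj by blast
      then have fj: "f x j = Suc j" using f(2)[of j x] \<open>j \<in> D2 x\<close> by (simp add: p_def)
      have iv: "inv\<^bsub>BijGroup S\<^esub> f x \<in> Bij S" using group.inv_closed[OF grp] f(1) by (simp add: BijGroup_carrier)
      have "(inv\<^bsub>BijGroup S\<^esub> f x) (Suc j) = j"
        using f(1)[of x] fj LS by (simp add: inv_BijGroup Bij_def bij_betw_def inv_into_f_eq)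
      then show ?thesis using dr False ec iv IH LS
        by (simp add: BijGroup_mult compose_def)
    qed
  qed
  have "eval_word (BijGroup S) (mapw f ws) L = 0" using key[of 0] by simp
  moreover have "\<one>\<^bsub>BijGroup S\<^esub> L = L" by (simp add: BijGroup_one S_def)
  moreover have "L \<noteq> 0" using ne by (simp add: L_def)
  ultimately show ?thesis using fc unfolding S_def L_def by (intro exI[of _ f]) auto
qed


lemma hom_eval:
  assumes A: "group A" and C: "group C" and h: "h \<in> hom A C" and ws: "set (map snd ws) \<subseteq> carrier A"
  shows "h (eval_word A ws) = eval_word C (mapw h ws)"
  using ws
proof (induction ws)
  case Nil
  have "group_hom A C h" using A C h by (simp add: group_hom_def group_hom_axioms_def)
  then show ?case by (simp add: group_hom.hom_one)
next
  case (Cons a ws)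
  obtain b x where a: "a = (b,x)" by force
  have gh: "group_hom A C h" using A C h by (simp add: group_hom_def group_hom_axioms_def)
  have x: "x \<in> carrier A" and ws': "set (map snd ws) \<subseteq> carrier A" using Cons.prems a by auto
  have l: "(if b then x else inv\<^bsub>A\<^esub> x) \<in> carrier A" using x group.inv_closed[OF A] by auto
  have "h (eval_word A (a # ws)) = h (if b then x else inv\<^bsub>A\<^esub> x) \<otimes>\<^bsub>C\<^esub> h (eval_word A ws)"
    using a l group.eval_carrier[OF A ws'] group_hom.hom_mult[OF gh] by simp
  also have "h (if b then x else inv\<^bsub>A\<^esub> x) = (if b then h x else inv\<^bsub>C\<^esub> h x)"
    using group_hom.hom_inv[OF gh x] by simp
  finally show ?case using Cons.IH[OF ws'] a by simp
qed

lemma mapw_cong: "(\<And>x. x \<in> set (map snd ws) \<Longrightarrow> f x = g x) \<Longrightarrow> mapw f ws = mapw g ws"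
  by (induction ws) auto

lemma (in group) eval_sub:
  assumes "subgroup H G" "set (map snd ws) \<subseteq> H"
  shows "eval_word (G\<lparr>carrier := H\<rparr>) ws = eval_word G ws"
  using assms(2) by (induction ws) (auto simp: m_inv_consistent[OF assms(1)])

lemma (in group) eval_in_sub:
  assumes "subgroup H G" "set (map snd ws) \<subseteq> H"
  shows "eval_word G ws \<in> H"
  using assms(2) by (induction ws) (auto simp: subgroup.m_closed[OF assms(1)] subgroup.m_inv_closed[OF assms(1)]
      subgroup.one_closed[OF assms(1)])


lemma sum_shift1: "(\<Sum>k\<in>{1..T}. g (k - 1)) = (\<Sum>j<T. (g j :: real))" for T :: nat
  by (induction T) (simp_all add: atLeastAtMostSuc_conv lessThan_Suc)

locale fmeas =
  fixes XX :: "'p set" and nuu :: "'p set \<Rightarrow> real"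
  assumes nu1: "nuu XX = 1"
    and nu0: "\<And>A. A \<subseteq> XX \<Longrightarrow> nuu A \<ge> 0"
    and nuadd: "\<And>A B. A \<subseteq> XX \<Longrightarrow> B \<subseteq> XX \<Longrightarrow> A \<inter> B = {} \<Longrightarrow> nuu (A \<union> B) = nuu A + nuu B"
begin

lemma nu_empty: "nuu {} = 0"
  using nuadd[of "{}" "{}"] by simp

lemma nu_mono: assumes AB: "A \<subseteq> B" "B \<subseteq> XX" shows "nuu A \<le> nuu B"
proof -
  have "A \<union> (B - A) = B" using AB by auto
  then have "nuu B = nuu A + nuu (B - A)" using nuadd[of A "B - A"] AB by auto
  then show ?thesis using nu0[of "B - A"] AB by auto
qed

lemma nu_le1: "A \<subseteq> XX \<Longrightarrow> nuu A \<le> 1"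
  using nu_mono[of A XX] nu1 by simp

lemma nu_finadd: "(\<And>i. i < n \<Longrightarrow> D i \<subseteq> XX) \<Longrightarrow> (\<And>i j. i < n \<Longrightarrow> j < n \<Longrightarrow> i \<noteq> j \<Longrightarrow> D i \<inter> D j = {}) \<Longrightarrow>
   nuu (\<Union>i<n. D i) = (\<Sum>i<n. nuu (D i))" for n :: nat
proof (induction n)
  case 0 then show ?case by (simp add: nu_empty)
next
  case (Suc n)
  have "(\<Union>i<Suc n. D i) = (\<Union>i<n. D i) \<union> D n" by (auto simp: lessThan_Suc)
  moreover have "(\<Union>i<n. D i) \<inter> D n = {}"
  proof -
    have "D i \<inter> D n = {}" if "i < n" for i using Suc.prems(2)[of i n] that by auto
    then show ?thesis by blast
  qed
  moreover have "(\<Union>i<n. D i) \<subseteq> XX" using Suc.prems(1) by (meson UN_least less_SucI lessThan_iff)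
  ultimately have "nuu (\<Union>i<Suc n. D i) = nuu (\<Union>i<n. D i) + nuu (D n)"
    using nuadd Suc.prems(1)[of n] by simp
  then show ?case using Suc by simp
qed

definition E :: "nat \<Rightarrow> ('p \<Rightarrow> nat) \<Rightarrow> real" where
  "E T h = (\<Sum>k\<in>{1..T}. nuu {x\<in>XX. k \<le> h x})"

lemma E_cong: "(\<And>x. x \<in> XX \<Longrightarrow> h x = h' x) \<Longrightarrow> E T h = E T h'"
  unfolding E_def by (intro sum.cong refl arg_cong[where f=nuu]) auto

lemma E_nonneg: "E T h \<ge> 0"
  unfolding E_def by (intro sum_nonneg) (auto intro: nu0)

lemma E_mono: "(\<And>x. x \<in> XX \<Longrightarrow> u x \<le> v x) \<Longrightarrow> E T u \<le> E T v"
  unfolding E_def by (intro sum_mono nu_mono) (auto intro: order_trans)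

lemma empty_lvl: fixes u :: "'p \<Rightarrow> nat" assumes u: "\<And>x. x \<in> XX \<Longrightarrow> u x < k" shows "nuu {x\<in>XX. k \<le> u x} = 0"
proof -
  have "{x\<in>XX. k \<le> u x} = {}"
  proof safe
    fix x assume "x \<in> XX" "k \<le> u x" then show "x \<in> {}" using u[of x] by simp
  qed
  then show ?thesis by (metis nu_empty)
qed

lemma E_zero: "E T (\<lambda>_. 0) = 0"
  unfolding E_def by (intro sum.neutral ballI empty_lvl) auto

lemma E_le1: "(\<And>x. x \<in> XX \<Longrightarrow> u x \<le> 1) \<Longrightarrow> E T u \<le> 1"
proof -
  assume u: "\<And>x. x \<in> XX \<Longrightarrow> u x \<le> 1"
  show ?thesis
  proof (cases "T = 0")
    case True then show ?thesis by (simp add: E_def)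
  next
    case False
    have "E T u = nuu {x\<in>XX. 1 \<le> u x} + (\<Sum>k\<in>{2..T}. nuu {x\<in>XX. k \<le> u x})"
      unfolding E_def using False by (subst sum.atLeast_Suc_atMost) (auto simp: numeral_2_eq_2)
    also have "(\<Sum>k\<in>{2..T}. nuu {x\<in>XX. k \<le> u x}) = 0"
      by (intro sum.neutral ballI empty_lvl) (use u in fastforce)
    finally show ?thesis using nu_le1[of "{x\<in>XX. 1 \<le> u x}"] by auto
  qed
qed

lemma E_extend: "(\<And>x. x \<in> XX \<Longrightarrow> u x \<le> T) \<Longrightarrow> T \<le> T' \<Longrightarrow> E T' u = E T u"
proof -
  assume u: "\<And>x. x \<in> XX \<Longrightarrow> u x \<le> T" and TT: "T \<le> T'"
  have "{1..T'} = {1..T} \<union> {Suc T..T'}" using TT by auto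
  then have "E T' u = E T u + (\<Sum>k\<in>{Suc T..T'}. nuu {x\<in>XX. k \<le> u x})"
    unfolding E_def by (simp add: sum.union_disjoint)
  also have "(\<Sum>k\<in>{Suc T..T'}. nuu {x\<in>XX. k \<le> u x}) = 0"
    by (intro sum.neutral ballI empty_lvl) (use u in fastforce)
  finally show ?thesis by simp
qed

lemma E_const: "E T (\<lambda>_. T) = real T"
  unfolding E_def using nu1 by simp

lemma E_ind:
  assumes D: "D \<subseteq> XX" and bd: "\<And>x. x \<in> XX \<Longrightarrow> h x + (if x \<in> D then 1 else 0) \<le> T"
  shows "E T (\<lambda>x. h x + (if x \<in> D then 1 else 0)) = E T h + nuu D"
proof -
  have split: "{x\<in>XX. k \<le> h x + (if x \<in> D then 1 else 0)} = {x\<in>XX. k \<le> h x} \<union> {x\<in>D. h x = k - 1}"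
    if "k \<ge> 1" for k using that D by auto
  have "E T (\<lambda>x. h x + (if x \<in> D then 1 else 0)) = (\<Sum>k\<in>{1..T}. nuu {x\<in>XX. k \<le> h x} + nuu {x\<in>D. h x = k - 1})"
    unfolding E_def
  proof (intro sum.cong refl)
    fix k assume k: "k \<in> {1..T}"
    have "{x\<in>XX. k \<le> h x} \<inter> {x\<in>D. h x = k - 1} = {}" using k by auto
    then show "nuu {x\<in>XX. k \<le> h x + (if x \<in> D then 1 else 0)} = nuu {x\<in>XX. k \<le> h x} + nuu {x\<in>D. h x = k - 1}"
      using split[of k] k D by (subst split) (auto intro!: nuadd)
  qed
  also have "\<dots> = E T h + (\<Sum>k\<in>{1..T}. nuu {x\<in>D. h x = k - 1})"
    by (simp add: E_def sum.distrib)
  also have "(\<Sum>k\<in>{1..T}. nuu {x\<in>D. h x = k - 1}) = (\<Sum>j<T. nuu {x\<in>D. h x = j})"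
    by (rule sum_shift1[where g="\<lambda>j. nuu {x\<in>D. h x = j}"])
  also have "\<dots> = nuu (\<Union>j<T. {x\<in>D. h x = j})"
    by (rule nu_finadd[symmetric]) (use D in auto)
  also have "(\<Union>j<T. {x\<in>D. h x = j}) = D"
  proof -
    have "h x < T" if "x \<in> D" for x using bd[of x] that D by auto
    then show ?thesis by auto
  qed
  finally show ?thesis .
qed

lemma E_add_aux:
  assumes bd: "\<And>x. x \<in> XX \<Longrightarrow> u x + v x \<le> T"
  shows "E T (\<lambda>x. u x + min (v x) m) = E T u + E T (\<lambda>x. min (v x) m)"
proof (induction m)
  case 0 then show ?case by (simp add: E_zero)
next
  case (Suc m)
  define D where "D = {x\<in>XX. Suc m \<le> v x}"
  have eq: "min (v x) (Suc m) = min (v x) m + (if x \<in> D then 1 else 0)" if "x \<in> XX" for x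
    using that by (auto simp: D_def)
  have DX: "D \<subseteq> XX" by (auto simp: D_def)
  have bd1: "(u x + min (v x) m) + (if x \<in> D then 1 else 0) \<le> T" if "x \<in> XX" for x
    using bd[OF that] by (auto simp: D_def)
  have bd2: "min (v x) m + (if x \<in> D then 1 else 0) \<le> T" if "x \<in> XX" for x
    using bd[OF that] by (auto simp: D_def)
  have "E T (\<lambda>x. u x + min (v x) (Suc m)) = E T (\<lambda>x. (u x + min (v x) m) + (if x \<in> D then 1 else 0))"
    by (rule E_cong) (simp add: eq)
  also have "\<dots> = E T (\<lambda>x. u x + min (v x) m) + nuu D"
    by (rule E_ind[OF DX bd1])
  finally have 1: "E T (\<lambda>x. u x + min (v x) (Suc m)) = E T (\<lambda>x. u x + min (v x) m) + nuu D" .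
  have "E T (\<lambda>x. min (v x) (Suc m)) = E T (\<lambda>x. min (v x) m + (if x \<in> D then 1 else 0))"
    by (rule E_cong) (simp add: eq)
  also have "\<dots> = E T (\<lambda>x. min (v x) m) + nuu D"
    by (rule E_ind[OF DX bd2])
  finally show ?case using 1 Suc.IH by simp
qed

lemma E_add:
  assumes bd: "\<And>x. x \<in> XX \<Longrightarrow> u x + v x \<le> T"
  shows "E T (\<lambda>x. u x + v x) = E T u + E T v"
proof -
  have "E T (\<lambda>x. u x + v x) = E T (\<lambda>x. u x + min (v x) T)"
    by (rule E_cong) (use bd in fastforce)
  also have "\<dots> = E T u + E T (\<lambda>x. min (v x) T)" by (rule E_add_aux[OF bd])
  also have "E T (\<lambda>x. min (v x) T) = E T v"
    by (rule E_cong) (use bd in fastforce)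
  finally show ?thesis .
qed

end

lemma grp_lcancel: "group G \<Longrightarrow> a \<in> carrier G \<Longrightarrow> x \<in> carrier G \<Longrightarrow> y \<in> carrier G \<Longrightarrow>
  a \<otimes>\<^bsub>G\<^esub> x = a \<otimes>\<^bsub>G\<^esub> y \<Longrightarrow> x = y"
  by (metis group.Units_eq monoid.Units_l_cancel group.is_monoid)

lemma locfin_measure:
  fixes Q :: "('q, 'z) monoid_scheme"
  assumes Q: "group Q" and M: "M \<subseteq> carrier Q" "M \<noteq> {}" and Mc: "\<And>a b. a \<in> M \<Longrightarrow> b \<in> M \<Longrightarrow> a \<otimes>\<^bsub>Q\<^esub> b \<in> M"
   and lf: "\<And>R. finite R \<Longrightarrow> R \<subseteq> M \<Longrightarrow> \<exists>T. finite T \<and> T \<noteq> {} \<and> T \<subseteq> M \<and> (\<forall>r\<in>R. \<forall>t\<in>T. r \<otimes>\<^bsub>Q\<^esub> t \<in> T)"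
  shows "\<exists>\<mu>::'q set \<Rightarrow> real. \<mu> M = 1 \<and> (\<forall>S\<subseteq>M. \<mu> S \<ge> 0) \<and>
     (\<forall>S T. S \<subseteq> M \<longrightarrow> T \<subseteq> M \<longrightarrow> S \<inter> T = {} \<longrightarrow> \<mu> (S \<union> T) = \<mu> S + \<mu> T) \<and>
     (\<forall>m\<in>M. \<forall>S\<subseteq>M. \<mu> (m <#\<^bsub>Q\<^esub> S) = \<mu> S)"
proof -
  define I where "I = Pow M"
  define Xt where "Xt = product_topology (\<lambda>_. top_of_set {0..1::real}) I"
  have tsp: "topspace Xt = (\<Pi>\<^sub>E i\<in>I. {0..1})" by (simp add: Xt_def)
  have cs: "compact_space Xt" unfolding Xt_def
    by (rule compact_space_product_topology[THEN iffD2]) (auto intro!: compact_space_subtopology)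
  have proj: "continuous_map Xt euclideanreal (\<lambda>\<mu>. \<mu> A)" if "A \<in> I" for A
    using continuous_map_product_projection[OF that, of "\<lambda>_. top_of_set {0..1::real}"] unfolding Xt_def
    by (rule continuous_map_into_fulltopology)
  have cl: "closedin Xt {\<mu> \<in> topspace Xt. g \<mu> = c}" if "continuous_map Xt euclideanreal g" for g c
    using closedin_continuous_map_preimage[OF that, of "{c}"] by simp
  have lc: "r <#\<^bsub>Q\<^esub> S \<in> I" if "r \<in> M" "S \<in> I" for r S
    using that Mc unfolding I_def l_coset_def by auto
  define ZA where "ZA = (\<lambda>(A,B). {\<mu> \<in> topspace Xt. \<mu> (A \<union> B) - \<mu> A - \<mu> B = 0})"
  define Z1 where "Z1 = {\<mu> \<in> topspace Xt. \<mu> M = 1}"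
  define ZI where "ZI = (\<lambda>(r,S). {\<mu> \<in> topspace Xt. \<mu> (r <#\<^bsub>Q\<^esub> S) - \<mu> S = 0})"
  define IA where "IA = {(A,B). A \<in> I \<and> B \<in> I \<and> A \<inter> B = {}}"
  define U where "U = ZA ` IA \<union> {Z1} \<union> ZI ` (M \<times> I)"
  have closed: "\<forall>C\<in>U. closedin Xt C"
  proof
    fix C assume "C \<in> U"
    then consider (a) A B where "A \<in> I" "B \<in> I" "C = ZA (A,B)" | (b) "C = Z1" | (c) r S where "r \<in> M" "S \<in> I" "C = ZI (r,S)"
      unfolding U_def IA_def by auto
    then show "closedin Xt C"
    proof cases
      case a
      have "A \<union> B \<in> I" using a by (auto simp: I_def)
      then show ?thesis unfolding a ZA_def prod.case
        by (rule cl[OF continuous_map_diff[OF continuous_map_diff[OF proj proj] proj]]) (use a in auto)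
    next
      case b
      have "M \<in> I" by (simp add: I_def)
      then show ?thesis unfolding b Z1_def using proj by (auto intro!: cl)
    next
      case c
      have "r <#\<^bsub>Q\<^esub> S \<in> I" using lc c by auto
      then show ?thesis unfolding c ZI_def prod.case
        by (rule cl[OF continuous_map_diff[OF proj proj]]) (use c in auto)
    qed
  qed
  have fip: "\<forall>F. finite F \<and> F \<subseteq> U \<longrightarrow> topspace Xt \<inter> \<Inter>F \<noteq> {}"
  proof (intro allI impI)
    fix F assume F: "finite F \<and> F \<subseteq> U"
    obtain C where C: "C \<subseteq> M \<times> I" "finite C" "F \<inter> ZI ` (M \<times> I) = ZI ` C"
      using finite_subset_image[of "F \<inter> ZI ` (M \<times> I)" ZI "M \<times> I"] F by auto
    define R where "R = fst ` C"
    have R: "finite R" "R \<subseteq> M" using C by (auto simp: R_def)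
    obtain T where T: "finite T" "T \<noteq> {}" "T \<subseteq> M" "\<forall>r\<in>R. \<forall>t\<in>T. r \<otimes>\<^bsub>Q\<^esub> t \<in> T"
      using lf[OF R] by blast
    define \<mu>T where "\<mu>T = (\<lambda>A\<in>I. real (card (A \<inter> T)) / real (card T))"
    have cT: "card T > 0" using T by (simp add: card_gt_0_iff)
    have val: "\<mu>T A = real (card (A \<inter> T)) / real (card T)" if "A \<in> I" for A
      using that by (simp add: \<mu>T_def)
    have inT: "\<mu>T \<in> topspace Xt"
    proof -
      have "\<mu>T A \<in> {0..1}" if "A \<in> I" for A
      proof -
        have "card (A \<inter> T) \<le> card T" using T(1) by (intro card_mono) auto
        then show ?thesis using val[OF that] cT by auto
      qed
      then show ?thesis unfolding tsp by (auto simp: \<mu>T_def PiE_iff)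
    qed
    have TQ: "T \<subseteq> carrier Q" using T M by auto
    have inv: "\<mu>T (r <#\<^bsub>Q\<^esub> S) = \<mu>T S" if r: "r \<in> R" and S: "S \<in> I" for r S
    proof -
      have rQ: "r \<in> carrier Q" using r R M by auto
      have SQ: "S \<subseteq> carrier Q" using S M by (auto simp: I_def)
      have injT: "inj_on (\<lambda>t. r \<otimes>\<^bsub>Q\<^esub> t) A" if "A \<subseteq> carrier Q" for A
        using that rQ grp_lcancel[OF Q rQ] unfolding inj_on_def by blast
      have img: "(\<lambda>t. r \<otimes>\<^bsub>Q\<^esub> t) ` T = T"
        by (rule endo_inj_surj[OF T(1)]) (use T(4) r injT[OF TQ] in auto)
      have eq: "(r <#\<^bsub>Q\<^esub> S) \<inter> T = (\<lambda>x. r \<otimes>\<^bsub>Q\<^esub> x) ` (S \<inter> T)"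
      proof
        show "(\<lambda>x. r \<otimes>\<^bsub>Q\<^esub> x) ` (S \<inter> T) \<subseteq> (r <#\<^bsub>Q\<^esub> S) \<inter> T"
          using T(4) r unfolding l_coset_def by auto
        show "(r <#\<^bsub>Q\<^esub> S) \<inter> T \<subseteq> (\<lambda>x. r \<otimes>\<^bsub>Q\<^esub> x) ` (S \<inter> T)"
        proof
          fix y assume y: "y \<in> (r <#\<^bsub>Q\<^esub> S) \<inter> T"
          then obtain x where x: "x \<in> S" "y = r \<otimes>\<^bsub>Q\<^esub> x" unfolding l_coset_def by auto
          obtain t where t: "t \<in> T" "y = r \<otimes>\<^bsub>Q\<^esub> t" using y img by blast
          have "x = t" using x t grp_lcancel[OF Q rQ, of x t] rQ SQ TQ by auto
          then show "y \<in> (\<lambda>x. r \<otimes>\<^bsub>Q\<^esub> x) ` (S \<inter> T)" using x t by auto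
        qed
      qed
      have "card ((r <#\<^bsub>Q\<^esub> S) \<inter> T) = card (S \<inter> T)"
        unfolding eq by (rule card_image) (rule injT, use SQ in auto)
      then show ?thesis using val[OF S] val[OF lc[OF _ S]] r R by auto
    qed
    have "\<mu>T \<in> C'" if "C' \<in> F" for C'
    proof -
      have "C' \<in> U" using that F by auto
      then consider (a) A B where "A \<in> I" "B \<in> I" "A \<inter> B = {}" "C' = ZA (A,B)" | (b) "C' = Z1" | (c) "C' \<in> ZI ` (M \<times> I)"
        unfolding U_def IA_def by auto
      then show ?thesis
      proof cases
        case a
        have "A \<union> B \<in> I" using a by (auto simp: I_def)
        moreover have "card ((A \<union> B) \<inter> T) = card (A \<inter> T) + card (B \<inter> T)"
        proof -
          have "(A \<union> B) \<inter> T = (A \<inter> T) \<union> (B \<inter> T)" by auto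
          then show ?thesis using a(3) T(1) by (simp add: card_Un_disjoint disjoint_iff)
        qed
        ultimately have "\<mu>T (A \<union> B) = \<mu>T A + \<mu>T B" using val a by (simp add: add_divide_distrib)
        then show ?thesis using inT unfolding a ZA_def by auto
      next
        case b
        have "M \<inter> T = T" using T by auto
        then have "\<mu>T M = 1" using val[of M] cT by (simp add: I_def)
        then show ?thesis using inT unfolding b Z1_def by auto
      next
        case c
        then have "C' \<in> ZI ` C" using C that by auto
        then obtain r S where rS: "(r,S) \<in> C" "C' = ZI (r,S)" by auto
        have rR: "r \<in> R" using rS(1) unfolding R_def by (metis fst_conv image_eqI)
        have SI: "S \<in> I" using rS(1) C(1) by auto
        show ?thesis using inv[OF rR SI] inT unfolding rS ZI_def by simp
      qed
    qed
    then have "\<mu>T \<in> \<Inter>F" by (rule InterI)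
    then have "\<mu>T \<in> topspace Xt \<inter> \<Inter>F" using inT by (rule IntI[rotated])
    then show "topspace Xt \<inter> \<Inter>F \<noteq> {}" by blast
  qed
  have H: "\<forall>\<U>. (\<forall>C\<in>\<U>. closedin Xt C) \<and> (\<forall>\<F>. finite \<F> \<and> \<F> \<subseteq> \<U> \<longrightarrow> topspace Xt \<inter> \<Inter>\<F> \<noteq> {}) \<longrightarrow>
      topspace Xt \<inter> \<Inter>\<U> \<noteq> {}"
    using cs unfolding compact_space_def compactin_fip by (elim conjE)
  have "topspace Xt \<inter> \<Inter>U \<noteq> {}" using H[rule_format, OF conjI[OF closed fip]] .
  then obtain \<mu> where \<mu>: "\<mu> \<in> topspace Xt" "\<mu> \<in> \<Inter>U" by blast
  show ?thesis
  proof (intro exI[of _ \<mu>] conjI allI impI ballI)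
    show "\<mu> M = 1" using \<mu> unfolding U_def Z1_def by auto
    show "\<mu> S \<ge> 0" if "S \<subseteq> M" for S
      using \<mu>(1) that unfolding tsp I_def by (auto simp: PiE_iff)
    show "\<mu> (S \<union> T) = \<mu> S + \<mu> T" if "S \<subseteq> M" "T \<subseteq> M" "S \<inter> T = {}" for S T
    proof -
      have "ZA (S,T) \<in> U" using that unfolding U_def IA_def I_def by auto
      then show ?thesis using \<mu> unfolding ZA_def by auto
    qed
    show "\<mu> (m <#\<^bsub>Q\<^esub> S) = \<mu> S" if "m \<in> M" "S \<subseteq> M" for m S
    proof -
      have "ZI (m,S) \<in> U" using that unfolding U_def I_def by auto
      then show ?thesis using \<mu> unfolding ZI_def by auto
    qed
  qed
qed

lemma floor_add_bounds:
  fixes a b :: real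
  shows "\<lfloor>a\<rfloor> + \<lfloor>b\<rfloor> \<le> \<lfloor>a + b\<rfloor> \<and> \<lfloor>a + b\<rfloor> \<le> \<lfloor>a\<rfloor> + \<lfloor>b\<rfloor> + 1"
  by (simp add: floor_add)

lemma extension_amenable:
  fixes Q :: "('q, 'z) monoid_scheme" and P :: "('p, 'w) monoid_scheme" and \<mu> :: "'q set \<Rightarrow> real"
  assumes Q: "group Q" and P: "amenable P" and pi: "\<pi> \<in> hom Q P" "\<pi> ` carrier Q = carrier P"
    and M: "M = {q \<in> carrier Q. \<pi> q = \<one>\<^bsub>P\<^esub>}"
    and mu: "\<mu> M = 1" "\<forall>S\<subseteq>M. \<mu> S \<ge> 0"
       "\<forall>S T. S \<subseteq> M \<longrightarrow> T \<subseteq> M \<longrightarrow> S \<inter> T = {} \<longrightarrow> \<mu> (S \<union> T) = \<mu> S + \<mu> T"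
       "\<forall>m\<in>M. \<forall>S\<subseteq>M. \<mu> (m <#\<^bsub>Q\<^esub> S) = \<mu> S"
  shows "amenable Q"
proof -
  interpret Qg: group Q by (rule Q)
  have Pg: "group P" using P by (simp add: amenable_def)
  interpret Pg: group P by (rule Pg)
  obtain \<nu> :: "'p set \<Rightarrow> real" where nu_all: "\<nu> (carrier P) = 1 \<and> (\<forall>A. A \<subseteq> carrier P \<longrightarrow> \<nu> A \<ge> 0) \<and>
      (\<forall>A B. A \<subseteq> carrier P \<longrightarrow> B \<subseteq> carrier P \<longrightarrow> A \<inter> B = {} \<longrightarrow> \<nu> (A \<union> B) = \<nu> A + \<nu> B) \<and>
      (\<forall>g A. g \<in> carrier P \<longrightarrow> A \<subseteq> carrier P \<longrightarrow> \<nu> (g <#\<^bsub>P\<^esub> A) = \<nu> A)"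
    by (rule exE[OF conjunct2[OF P[unfolded amenable_def]]]) assumption
  have nu: "\<nu> (carrier P) = 1" "\<forall>A. A \<subseteq> carrier P \<longrightarrow> \<nu> A \<ge> 0"
      "\<forall>A B. A \<subseteq> carrier P \<longrightarrow> B \<subseteq> carrier P \<longrightarrow> A \<inter> B = {} \<longrightarrow> \<nu> (A \<union> B) = \<nu> A + \<nu> B"
      "\<forall>g A. g \<in> carrier P \<longrightarrow> A \<subseteq> carrier P \<longrightarrow> \<nu> (g <#\<^bsub>P\<^esub> A) = \<nu> A"
    using nu_all by auto
  interpret fm: fmeas "carrier P" \<nu> using nu by unfold_locales auto
  have gh: "group_hom Q P \<pi>" using Q Pg pi(1) by (simp add: group_hom_def group_hom_axioms_def)
  have piC: "\<pi> q \<in> carrier P" if "q \<in> carrier Q" for q using pi(1) that by (auto simp: hom_def)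
  have MQ: "M \<subseteq> carrier Q" using M by auto
  have Mmult: "a \<otimes>\<^bsub>Q\<^esub> b \<in> M" if "a \<in> M" "b \<in> M" for a b
    using that group_hom.hom_mult[OF gh] unfolding M by auto
  have Minv: "inv\<^bsub>Q\<^esub> a \<in> M" if "a \<in> M" for a
    using that group_hom.hom_inv[OF gh] unfolding M by auto
  have mu1: "\<mu> S \<le> 1" if "S \<subseteq> M" for S
  proof -
    have "\<mu> M = \<mu> S + \<mu> (M - S)" using mu(3)[rule_format, of S "M - S"] that by (simp add: Un_absorb1)
    moreover have "0 \<le> \<mu> (M - S)" using mu(2) by auto
    ultimately show ?thesis using mu(1) by linarith
  qed
  define s where "s p = (SOME q. q \<in> carrier Q \<and> \<pi> q = p)" for p
  have s: "s p \<in> carrier Q \<and> \<pi> (s p) = p" if "p \<in> carrier P" for p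
  proof -
    have "p \<in> \<pi> ` carrier Q" using that pi(2) by simp
    then obtain q where "p = \<pi> q" "q \<in> carrier Q" by (rule imageE)
    then show ?thesis unfolding s_def by (intro someI_ex[of "\<lambda>q. q \<in> carrier Q \<and> \<pi> q = p"]) blast
  qed
  define f where "f A p = \<mu> {m \<in> M. s p \<otimes>\<^bsub>Q\<^esub> m \<in> A}" for A p
  have f_indep: "f A p = \<mu> {m \<in> M. q \<otimes>\<^bsub>Q\<^esub> m \<in> A}" if q: "q \<in> carrier Q" "\<pi> q = p" for A p q
  proof -
    have p: "p \<in> carrier P" using q piC by auto
    define q0 where "q0 = s p"
    have q0: "q0 \<in> carrier Q" "\<pi> q0 = p" using s[OF p] q0_def by auto
    define k where "k = inv\<^bsub>Q\<^esub> q0 \<otimes>\<^bsub>Q\<^esub> q"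
    have kQ: "k \<in> carrier Q" using q0 q by (simp add: k_def)
    have "\<pi> k = inv\<^bsub>P\<^esub> p \<otimes>\<^bsub>P\<^esub> p"
      using q0 q group_hom.hom_mult[OF gh] group_hom.hom_inv[OF gh] by (simp add: k_def)
    then have kM: "k \<in> M" using kQ p unfolding M by simp
    define S0 where "S0 = {m \<in> M. q0 \<otimes>\<^bsub>Q\<^esub> m \<in> A}"
    have S0M: "S0 \<subseteq> M" by (auto simp: S0_def)
    have qk: "q = q0 \<otimes>\<^bsub>Q\<^esub> k" using q0 q by (simp add: k_def Qg.m_assoc[symmetric])
    have eq: "{m \<in> M. q \<otimes>\<^bsub>Q\<^esub> m \<in> A} = inv\<^bsub>Q\<^esub> k <#\<^bsub>Q\<^esub> S0"
    proof
      show "{m \<in> M. q \<otimes>\<^bsub>Q\<^esub> m \<in> A} \<subseteq> inv\<^bsub>Q\<^esub> k <#\<^bsub>Q\<^esub> S0"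
      proof
        fix m assume m: "m \<in> {m \<in> M. q \<otimes>\<^bsub>Q\<^esub> m \<in> A}"
        have mQ: "m \<in> carrier Q" using m MQ by auto
        have "k \<otimes>\<^bsub>Q\<^esub> m \<in> S0" using m kM Mmult qk q0 kQ mQ by (auto simp: S0_def Qg.m_assoc)
        moreover have "m = inv\<^bsub>Q\<^esub> k \<otimes>\<^bsub>Q\<^esub> (k \<otimes>\<^bsub>Q\<^esub> m)" using kQ mQ by (simp add: Qg.m_assoc[symmetric])
        ultimately show "m \<in> inv\<^bsub>Q\<^esub> k <#\<^bsub>Q\<^esub> S0" unfolding l_coset_def by blast
      qed
      show "inv\<^bsub>Q\<^esub> k <#\<^bsub>Q\<^esub> S0 \<subseteq> {m \<in> M. q \<otimes>\<^bsub>Q\<^esub> m \<in> A}"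
      proof
        fix m assume "m \<in> inv\<^bsub>Q\<^esub> k <#\<^bsub>Q\<^esub> S0"
        then obtain t where t: "t \<in> S0" "m = inv\<^bsub>Q\<^esub> k \<otimes>\<^bsub>Q\<^esub> t" unfolding l_coset_def by blast
        have tQ: "t \<in> carrier Q" using t S0M MQ by auto
        have "m \<in> M" using t Mmult Minv kM S0M by auto
        moreover have "q \<otimes>\<^bsub>Q\<^esub> m = q0 \<otimes>\<^bsub>Q\<^esub> t"
          using t qk q0 kQ tQ by (simp add: Qg.m_assoc[symmetric]) (simp add: Qg.m_assoc)
        ultimately show "m \<in> {m \<in> M. q \<otimes>\<^bsub>Q\<^esub> m \<in> A}" using t by (auto simp: S0_def)
      qed
    qed
    have "\<mu> {m \<in> M. q \<otimes>\<^bsub>Q\<^esub> m \<in> A} = \<mu> S0" unfolding eq using mu(4) Minv[OF kM] S0M by blast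
    then show ?thesis by (simp add: f_def S0_def q0_def)
  qed
  have f01: "0 \<le> f A p \<and> f A p \<le> 1" for A p
    using mu(2) mu1[of "{m \<in> M. s p \<otimes>\<^bsub>Q\<^esub> m \<in> A}"] by (auto simp: f_def)
  have f_add: "f (A \<union> B) p = f A p + f B p" if "A \<inter> B = {}" for A B p
  proof -
    have eq: "{m \<in> M. s p \<otimes>\<^bsub>Q\<^esub> m \<in> A \<union> B} = {m \<in> M. s p \<otimes>\<^bsub>Q\<^esub> m \<in> A} \<union> {m \<in> M. s p \<otimes>\<^bsub>Q\<^esub> m \<in> B}" by auto
    have d: "{m \<in> M. s p \<otimes>\<^bsub>Q\<^esub> m \<in> A} \<inter> {m \<in> M. s p \<otimes>\<^bsub>Q\<^esub> m \<in> B} = {}" using that by auto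
    show ?thesis unfolding f_def eq by (rule mu(3)[rule_format]) (use d in auto)
  qed
  have f_top: "f (carrier Q) p = 1" if "p \<in> carrier P" for p
  proof -
    have "{m \<in> M. s p \<otimes>\<^bsub>Q\<^esub> m \<in> carrier Q} = M" using s[OF that] MQ by auto
    then show ?thesis using mu(1) by (simp add: f_def)
  qed
  have f_trans: "f (a <#\<^bsub>Q\<^esub> A) (\<pi> a \<otimes>\<^bsub>P\<^esub> p) = f A p" if a: "a \<in> carrier Q" "A \<subseteq> carrier Q" "p \<in> carrier P" for a A p
  proof -
    have sp: "s p \<in> carrier Q" "\<pi> (s p) = p" using s[OF a(3)] by auto
    have "f (a <#\<^bsub>Q\<^esub> A) (\<pi> a \<otimes>\<^bsub>P\<^esub> p) = \<mu> {m \<in> M. (a \<otimes>\<^bsub>Q\<^esub> s p) \<otimes>\<^bsub>Q\<^esub> m \<in> a <#\<^bsub>Q\<^esub> A}"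
      by (rule f_indep) (use sp a group_hom.hom_mult[OF gh] in auto)
    also have "{m \<in> M. (a \<otimes>\<^bsub>Q\<^esub> s p) \<otimes>\<^bsub>Q\<^esub> m \<in> a <#\<^bsub>Q\<^esub> A} = {m \<in> M. s p \<otimes>\<^bsub>Q\<^esub> m \<in> A}"
    proof -
      have "(a \<otimes>\<^bsub>Q\<^esub> s p) \<otimes>\<^bsub>Q\<^esub> m \<in> a <#\<^bsub>Q\<^esub> A \<longleftrightarrow> s p \<otimes>\<^bsub>Q\<^esub> m \<in> A" if m: "m \<in> M" for m
      proof -
        have mQ: "m \<in> carrier Q" using m MQ by auto
        have y: "s p \<otimes>\<^bsub>Q\<^esub> m \<in> carrier Q" using sp mQ by simp
        have "(a \<otimes>\<^bsub>Q\<^esub> s p) \<otimes>\<^bsub>Q\<^esub> m = a \<otimes>\<^bsub>Q\<^esub> (s p \<otimes>\<^bsub>Q\<^esub> m)" using a sp mQ by (simp add: Qg.m_assoc)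
        moreover have "a \<otimes>\<^bsub>Q\<^esub> y' \<in> a <#\<^bsub>Q\<^esub> A \<longleftrightarrow> y' \<in> A" if "y' \<in> carrier Q" for y'
        proof
          assume "a \<otimes>\<^bsub>Q\<^esub> y' \<in> a <#\<^bsub>Q\<^esub> A"
          then obtain z where "z \<in> A" "a \<otimes>\<^bsub>Q\<^esub> y' = a \<otimes>\<^bsub>Q\<^esub> z" unfolding l_coset_def by blast
          then show "y' \<in> A" using that a grp_lcancel[OF Q] by (metis subsetD)
        next
          assume "y' \<in> A" then show "a \<otimes>\<^bsub>Q\<^esub> y' \<in> a <#\<^bsub>Q\<^esub> A" unfolding l_coset_def by blast
        qed
        ultimately show ?thesis using y by simp
      qed
      then show ?thesis by auto
    qed
    finally show ?thesis by (simp add: f_def)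
  qed
  define \<alpha> where "\<alpha> n A p = nat \<lfloor>real n * f A p\<rfloor>" for n :: nat and A p
  have \<alpha>_le: "\<alpha> n A p \<le> n" for n A p
  proof -
    have "real n * f A p \<le> real n" using f01[of A p] by (simp add: mult_left_le)
    then have "\<lfloor>real n * f A p\<rfloor> \<le> int n" by (metis floor_mono floor_of_nat)
    then show ?thesis by (simp add: \<alpha>_def)
  qed
  have \<alpha>_iff: "k \<le> \<alpha> n A p \<longleftrightarrow> real k \<le> real n * f A p" for k n A p
  proof -
    have "0 \<le> real n * f A p" using f01[of A p] by simp
    then show ?thesis by (simp add: \<alpha>_def le_nat_iff le_floor_iff)
  qed
  define Sn where "Sn n A = fm.E n (\<alpha> n A) / real n" for n A
  have Sn01: "0 \<le> Sn n A \<and> Sn n A \<le> 1" if "n \<ge> 1" for n A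
  proof -
    have "fm.E n (\<alpha> n A) \<le> fm.E n (\<lambda>_. n)" by (rule fm.E_mono) (simp add: \<alpha>_le)
    then have "fm.E n (\<alpha> n A) \<le> real n" by (simp add: fm.E_const)
    then show ?thesis using fm.E_nonneg[of n "\<alpha> n A"] that by (simp add: Sn_def divide_le_eq_1)
  qed
  have Sn_add: "\<bar>Sn n (A \<union> B) - Sn n A - Sn n B\<bar> \<le> 1 / real n" if "A \<inter> B = {}" "n \<ge> 1" for n A B
  proof -
    define u where "u = \<alpha> n A" define v where "v = \<alpha> n B" define w where "w = \<alpha> n (A \<union> B)"
    define d where "d p = w p - (u p + v p)" for p
    have wuv: "u p + v p \<le> w p \<and> w p \<le> u p + v p + 1" for p
    proof -
      have fa: "real n * f (A \<union> B) p = real n * f A p + real n * f B p" using f_add[OF that(1)] by (simp add: algebra_simps)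
      have nn: "0 \<le> real n * f A p" "0 \<le> real n * f B p" using f01 by auto
      have "\<lfloor>real n * f A p\<rfloor> + \<lfloor>real n * f B p\<rfloor> \<le> \<lfloor>real n * f (A \<union> B) p\<rfloor> \<and>
            \<lfloor>real n * f (A \<union> B) p\<rfloor> \<le> \<lfloor>real n * f A p\<rfloor> + \<lfloor>real n * f B p\<rfloor> + 1"
        unfolding fa by (rule floor_add_bounds)
      moreover have "0 \<le> real n * f (A \<union> B) p" using f01 by auto
      moreover have "int (u p) = \<lfloor>real n * f A p\<rfloor>" "int (v p) = \<lfloor>real n * f B p\<rfloor>"
        "int (w p) = \<lfloor>real n * f (A \<union> B) p\<rfloor>"
        using nn calculation(2) by (simp_all add: u_def v_def w_def \<alpha>_def)
      ultimately show ?thesis by linarith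
    qed
    have wd: "w p = (u p + v p) + d p" for p using wuv[of p] by (simp add: d_def)
    have d1: "d p \<le> 1" for p using wuv[of p] unfolding d_def by linarith
    have "fm.E n w = fm.E n (\<lambda>p. (u p + v p) + d p)" by (rule fm.E_cong) (simp add: wd)
    also have "\<dots> = fm.E n (\<lambda>p. u p + v p) + fm.E n d"
      by (rule fm.E_add) (metis wd \<alpha>_le w_def)
    also have "fm.E n (\<lambda>p. u p + v p) = fm.E n u + fm.E n v"
      by (rule fm.E_add) (metis wuv \<alpha>_le w_def le_trans)
    finally have "fm.E n w - fm.E n u - fm.E n v = fm.E n d" by simp
    moreover have "0 \<le> fm.E n d" "fm.E n d \<le> 1" using fm.E_nonneg fm.E_le1 d1 by auto
    ultimately have le1: "\<bar>fm.E n w - fm.E n u - fm.E n v\<bar> \<le> 1" by simp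
    have eqd: "Sn n (A \<union> B) - Sn n A - Sn n B = (fm.E n w - fm.E n u - fm.E n v) / real n"
      by (simp add: Sn_def u_def v_def w_def diff_divide_distrib)
    have np: "real n > 0" using that(2) by simp
    have "\<bar>(fm.E n w - fm.E n u - fm.E n v) / real n\<bar> = \<bar>fm.E n w - fm.E n u - fm.E n v\<bar> / real n"
      by (simp add: abs_divide)
    also have "\<dots> \<le> 1 / real n" using divide_right_mono[OF le1, of "real n"] by simp
    finally show ?thesis unfolding eqd .
  qed
  have Sn_mono: "Sn n A \<le> Sn (2 * n) A" if "n \<ge> 1" for n A
  proof -
    define u where "u = \<alpha> n A" define w where "w = \<alpha> (2 * n) A"
    define d where "d p = w p - (u p + u p)" for p
    have wu: "u p + u p \<le> w p" for p
    proof -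
      have "2 * \<lfloor>real n * f A p\<rfloor> \<le> \<lfloor>2 * (real n * f A p)\<rfloor>"
        using floor_add_bounds[of "real n * f A p" "real n * f A p"] by simp
      moreover have "0 \<le> real n * f A p" using f01 by auto
      ultimately show ?thesis unfolding u_def w_def \<alpha>_def by (simp add: mult.assoc)
    qed
    have wd: "w p = (u p + u p) + d p" for p using wu[of p] by (simp add: d_def)
    have "fm.E (2 * n) w = fm.E (2 * n) (\<lambda>p. (u p + u p) + d p)" by (rule fm.E_cong) (simp add: wd)
    also have "\<dots> = fm.E (2 * n) (\<lambda>p. u p + u p) + fm.E (2 * n) d"
      by (rule fm.E_add) (metis wd \<alpha>_le w_def)
    also have "fm.E (2 * n) (\<lambda>p. u p + u p) = fm.E (2 * n) u + fm.E (2 * n) u"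
      by (rule fm.E_add) (metis wu \<alpha>_le w_def le_trans)
    also have "fm.E (2 * n) u = fm.E n u" by (rule fm.E_extend) (auto simp: u_def \<alpha>_le)
    finally have "fm.E (2 * n) w \<ge> 2 * fm.E n u" using fm.E_nonneg[of "2*n" d] by simp
    then show ?thesis using that by (simp add: Sn_def u_def w_def field_simps)
  qed
  have Sn_top: "Sn n (carrier Q) = 1" if "n \<ge> 1" for n
  proof -
    have "fm.E n (\<alpha> n (carrier Q)) = fm.E n (\<lambda>_. n)" by (rule fm.E_cong) (simp add: \<alpha>_def f_top)
    then show ?thesis using that by (simp add: Sn_def fm.E_const)
  qed
  have Sn_inv: "Sn n (a <#\<^bsub>Q\<^esub> A) = Sn n A" if a: "a \<in> carrier Q" "A \<subseteq> carrier Q" for n a A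
  proof -
    have pa: "\<pi> a \<in> carrier P" using piC a by auto
    have lv: "{p \<in> carrier P. k \<le> \<alpha> n (a <#\<^bsub>Q\<^esub> A) p} = \<pi> a <#\<^bsub>P\<^esub> {p \<in> carrier P. k \<le> \<alpha> n A p}" for k
    proof
      show "{p \<in> carrier P. k \<le> \<alpha> n (a <#\<^bsub>Q\<^esub> A) p} \<subseteq> \<pi> a <#\<^bsub>P\<^esub> {p \<in> carrier P. k \<le> \<alpha> n A p}"
      proof
        fix p assume p: "p \<in> {p \<in> carrier P. k \<le> \<alpha> n (a <#\<^bsub>Q\<^esub> A) p}"
        define p' where "p' = inv\<^bsub>P\<^esub> \<pi> a \<otimes>\<^bsub>P\<^esub> p"
        have p': "p' \<in> carrier P" "p = \<pi> a \<otimes>\<^bsub>P\<^esub> p'" using p pa by (auto simp: p'_def Pg.m_assoc[symmetric])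
        have "\<alpha> n (a <#\<^bsub>Q\<^esub> A) p = \<alpha> n A p'" using f_trans[OF a p'(1)] p'(2) by (simp add: \<alpha>_def)
        then show "p \<in> \<pi> a <#\<^bsub>P\<^esub> {p \<in> carrier P. k \<le> \<alpha> n A p}" using p p' unfolding l_coset_def by auto
      qed
      show "\<pi> a <#\<^bsub>P\<^esub> {p \<in> carrier P. k \<le> \<alpha> n A p} \<subseteq> {p \<in> carrier P. k \<le> \<alpha> n (a <#\<^bsub>Q\<^esub> A) p}"
      proof
        fix p assume "p \<in> \<pi> a <#\<^bsub>P\<^esub> {p \<in> carrier P. k \<le> \<alpha> n A p}"
        then obtain p' where p': "p' \<in> carrier P" "k \<le> \<alpha> n A p'" "p = \<pi> a \<otimes>\<^bsub>P\<^esub> p'" unfolding l_coset_def by auto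
        have "\<alpha> n (a <#\<^bsub>Q\<^esub> A) p = \<alpha> n A p'" using f_trans[OF a p'(1)] p'(3) by (simp add: \<alpha>_def)
        then show "p \<in> {p \<in> carrier P. k \<le> \<alpha> n (a <#\<^bsub>Q\<^esub> A) p}" using p' pa by auto
      qed
    qed
    have "fm.E n (\<alpha> n (a <#\<^bsub>Q\<^esub> A)) = fm.E n (\<alpha> n A)"
      unfolding fm.E_def lv using nu(4) pa by (intro sum.cong refl) auto
    then show ?thesis by (simp add: Sn_def)
  qed
  define seq where "seq A j = Sn (2 ^ j) A" for A j
  define \<mu>Q where "\<mu>Q A = (SUP j. seq A j)" for A
  have seq01: "0 \<le> seq A j \<and> seq A j \<le> 1" for A j using Sn01[of "2^j"] by (simp add: seq_def)
  have bdd: "bdd_above (range (seq A))" for A by (rule bdd_aboveI[of _ 1]) (use seq01 in auto)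
  have inc: "incseq (seq A)" for A
    by (rule incseq_SucI) (simp add: seq_def Sn_mono)
  have lim: "seq A \<longlonglongrightarrow> \<mu>Q A" for A
    unfolding \<mu>Q_def by (rule LIMSEQ_incseq_SUP[OF bdd inc])
  show ?thesis unfolding amenable_def
  proof (intro conjI exI[of _ \<mu>Q] allI impI Q)
    show "\<mu>Q (carrier Q) = 1" unfolding \<mu>Q_def seq_def using Sn_top by simp
    show "\<mu>Q A \<ge> 0" if "A \<subseteq> carrier Q" for A
      using cSUP_upper[OF UNIV_I bdd[of A], of 0] seq01[of A 0] by (simp add: \<mu>Q_def)
    show "\<mu>Q (g <#\<^bsub>Q\<^esub> A) = \<mu>Q A" if "g \<in> carrier Q" "A \<subseteq> carrier Q" for g A
      unfolding \<mu>Q_def seq_def using Sn_inv[OF that] by simp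
    show "\<mu>Q (A \<union> B) = \<mu>Q A + \<mu>Q B" if "A \<subseteq> carrier Q" "B \<subseteq> carrier Q" "A \<inter> B = {}" for A B
    proof -
      have l1: "(\<lambda>j. seq (A \<union> B) j - seq A j - seq B j) \<longlonglongrightarrow> \<mu>Q (A \<union> B) - \<mu>Q A - \<mu>Q B"
        by (intro tendsto_diff lim)
      have lim0: "(\<lambda>j. (1/2::real) ^ j) \<longlonglongrightarrow> 0" by (rule LIMSEQ_realpow_zero) auto
      have bnd: "norm (seq (A \<union> B) j - seq A j - seq B j) \<le> (1/2) ^ j" for j
        using Sn_add[OF that(3), of "2^j"] by (simp add: seq_def power_one_over)
      have ev: "eventually (\<lambda>j. norm (seq (A \<union> B) j - seq A j - seq B j) \<le> (1/2::real) ^ j) sequentially"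
        using bnd by (simp add: always_eventually)
      have l2: "(\<lambda>j. seq (A \<union> B) j - seq A j - seq B j) \<longlonglongrightarrow> 0"
        by (rule Lim_null_comparison[OF ev lim0])
      from LIMSEQ_unique[OF l1 l2] show ?thesis by simp
    qed
  qed
qed

lemma (in group) main:
  assumes "N \<lhd> G"
    and "is_free_group (G\<lparr>carrier := N\<rparr>)"
    and "amenable (G Mod N)"
  shows "residually_amenable G"
proof -
  interpret NN: normal N G by fact
  have Nsub: "subgroup N G" by (rule normal_imp_subgroup[OF assms(1)])
  define F where "F = G\<lparr>carrier := N\<rparr>"
  obtain B where fr: "free_group_on F B" using assms(2) unfolding is_free_group_def F_def by blast
  have F: "group F" and BF: "B \<subseteq> N" and gen: "generate F B = N"
    using fr by (auto simp: free_group_on_def F_def)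
  have cF: "carrier F = N" by (simp add: F_def)
  show ?thesis unfolding residually_amenable_def
  proof (intro ballI impI)
    fix g assume g: "g \<in> carrier G" "g \<noteq> \<one>"
    show "\<exists>(H :: 'a set monoid) h. group H \<and> amenable H \<and> h \<in> hom G H \<and> h ` carrier G = carrier H \<and> h g \<noteq> \<one>\<^bsub>H\<^esub>"
    proof (cases "g \<in> N")
      case False
      have "N #> g \<noteq> N" using False g coset_join1 Nsub by blast
      then show ?thesis using assms(3) NN.factorgroup_is_group NN.r_coset_hom_Mod g
        by (intro exI[of _ "G Mod N"] exI[of _ "\<lambda>x. N #> x"]) (auto simp: carrier_FactGroup)
    next
      case True
      obtain ws0 where ws0: "set (map snd ws0) \<subseteq> B" "eval_word F ws0 = g"
        using group.eval_generate[OF F, of B g] BF True gen cF by auto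
      obtain ws where ws: "set (map snd ws) \<subseteq> B" "reduced_word ws" "eval_word F ws = g"
        using group.reduce_exists[OF F ws0(1)] BF cF ws0 by auto
      have wsne: "ws \<noteq> []" using ws g by (auto simp: F_def)
      define S0 where "S0 = {0..length ws}"
      define Hs where "Hs = BijGroup S0"
      have Hs: "group Hs" by (simp add: Hs_def group_BijGroup)
      obtain f where f: "f \<in> UNIV \<rightarrow> carrier Hs" "eval_word Hs (mapw f ws) \<noteq> \<one>\<^bsub>Hs\<^esub>"
        using word_perm[OF ws(2) wsne] unfolding Hs_def S0_def by blast
      have fB: "f \<in> B \<rightarrow> carrier Hs" using f(1) by auto
      define \<psi>0 where "\<psi>0 = freeext F B Hs f"
      have psi0: "\<psi>0 \<in> hom F Hs" using freeext_hom[OF fr Hs fB] unfolding \<psi>0_def .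
      have psi0g: "\<psi>0 g \<noteq> \<one>\<^bsub>Hs\<^esub>" using freeext_eval[OF fr Hs fB ws(1)] f(2) ws(3) by (simp add: \<psi>0_def)
      define K where "K = {y \<in> N. \<forall>\<psi>\<in>hom F Hs. \<psi> y = \<one>\<^bsub>Hs\<^esub>}"
      have KN: "K \<subseteq> N" by (auto simp: K_def)
      have gK: "g \<notin> K" using psi0 psi0g by (auto simp: K_def)
      have ghF: "group_hom F Hs \<psi>" if "\<psi> \<in> hom F Hs" for \<psi>
        using F Hs that by (simp add: group_hom_def group_hom_axioms_def)
      have invF: "inv\<^bsub>F\<^esub> x = inv x" if "x \<in> N" for x
        using m_inv_consistent[OF Nsub that] by (simp add: F_def)
      have multF: "x \<otimes>\<^bsub>F\<^esub> y = x \<otimes> y" for x y by (simp add: F_def)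
      have oneF: "\<one>\<^bsub>F\<^esub> = \<one>" by (simp add: F_def)
      have Ksub: "subgroup K G"
      proof (rule subgroupI)
        show "K \<subseteq> carrier G" using KN NN.subset by blast
        have "\<one> \<in> K" unfolding K_def using group_hom.hom_one[OF ghF] oneF NN.one_closed by auto
        then show "K \<noteq> {}" by blast
        show "inv a \<in> K" if a: "a \<in> K" for a
        proof -
          have aN: "a \<in> N" using a KN by auto
          { fix \<psi> assume psi: "\<psi> \<in> hom F Hs"
            have "\<psi> (inv a) = \<psi> (inv\<^bsub>F\<^esub> a)" using invF[OF aN] by simp
            also have "\<dots> = inv\<^bsub>Hs\<^esub> (\<psi> a)" using group_hom.hom_inv[OF ghF[OF psi]] aN cF by simp
            also have "\<dots> = \<one>\<^bsub>Hs\<^esub>" using a psi by (simp add: K_def monoid.inv_one[OF group.is_monoid[OF Hs]])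
            finally have "\<psi> (inv a) = \<one>\<^bsub>Hs\<^esub>" . }
          then show ?thesis using aN NN.m_inv_closed by (auto simp: K_def)
        qed
        show "a \<otimes> b \<in> K" if a: "a \<in> K" and b: "b \<in> K" for a b
        proof -
          have aN: "a \<in> N" "b \<in> N" using a b KN by auto
          { fix \<psi> assume psi: "\<psi> \<in> hom F Hs"
            have "\<psi> (a \<otimes> b) = \<psi> a \<otimes>\<^bsub>Hs\<^esub> \<psi> b" using group_hom.hom_mult[OF ghF[OF psi]] aN cF multF by metis
            also have "\<dots> = \<one>\<^bsub>Hs\<^esub>" using a b psi by (simp add: K_def monoid.l_one[OF group.is_monoid[OF Hs]] monoid.one_closed[OF group.is_monoid[OF Hs]])
            finally have "\<psi> (a \<otimes> b) = \<one>\<^bsub>Hs\<^esub>" . }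
          then show ?thesis using aN NN.m_closed by (auto simp: K_def)
        qed
      qed
      have Knorm: "K \<lhd> G"
        unfolding normal_inv_iff
      proof (intro conjI ballI Ksub)
        fix x h assume x: "x \<in> carrier G" and h: "h \<in> K"
        have hN: "h \<in> N" using h KN by auto
        have cN: "x \<otimes> h \<otimes> inv x \<in> N" using NN.inv_op_closed2 x hN by blast
        { fix \<psi> assume psi: "\<psi> \<in> hom F Hs"
          define \<psi>' where "\<psi>' = (\<lambda>z. \<psi> (x \<otimes> z \<otimes> inv x))"
          have "\<psi>' \<in> hom F Hs"
          proof (rule homI)
            fix z assume "z \<in> carrier F"
            then have "x \<otimes> z \<otimes> inv x \<in> carrier F" using NN.inv_op_closed2 x cF by blast
            then show "\<psi>' z \<in> carrier Hs" using psi unfolding \<psi>'_def by (auto simp: hom_def)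
          next
            fix z w assume zw: "z \<in> carrier F" "w \<in> carrier F"
            have zw': "z \<in> carrier G" "w \<in> carrier G" using zw cF NN.subset by auto
            have c: "x \<otimes> z \<otimes> inv x \<in> carrier F" "x \<otimes> w \<otimes> inv x \<in> carrier F"
              using NN.inv_op_closed2 x cF zw by auto
            have cc: "inv x \<otimes> (x \<otimes> y) = y" if "y \<in> carrier G" for y
              using x that by (simp add: m_assoc[symmetric])
            have "x \<otimes> (z \<otimes> w) \<otimes> inv x = (x \<otimes> z \<otimes> inv x) \<otimes> (x \<otimes> w \<otimes> inv x)"
              using x zw' by (simp add: m_assoc cc)
            then show "\<psi>' (z \<otimes>\<^bsub>F\<^esub> w) = \<psi>' z \<otimes>\<^bsub>Hs\<^esub> \<psi>' w"
              unfolding \<psi>'_def multF using group_hom.hom_mult[OF ghF[OF psi] c] multF by metis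
          qed
          then have "\<psi>' h = \<one>\<^bsub>Hs\<^esub>" using h by (auto simp: K_def)
          then have "\<psi> (x \<otimes> h \<otimes> inv x) = \<one>\<^bsub>Hs\<^esub>" by (simp add: \<psi>'_def) }
        then show "x \<otimes> h \<otimes> inv x \<in> K" using cN by (auto simp: K_def)
      qed
      interpret KK: normal K G by (rule Knorm)
      define Q where "Q = G Mod K"
      define P where "P = G Mod N"
      define pj where "pj = (\<lambda>Xc. N <#> Xc)"
      have NK: "N <#> K = N"
      proof
        show "N <#> K \<subseteq> N" using mono_set_mult[OF order_refl KN, of G] subgroup_mult_id[OF Nsub] by blast
        show "N \<subseteq> N <#> K"
        proof
          fix x assume "x \<in> N"
          then have "x = x \<otimes> \<one>" "x \<in> carrier G" using NN.subset by auto
          then show "x \<in> N <#> K" using \<open>x \<in> N\<close> KK.one_closed unfolding set_mult_def by blast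
        qed
      qed
      have piK: "pj (K #> x) = N #> x" if "x \<in> carrier G" for x
        using setmult_rcos_assoc[of N K x] NK that NN.subset KK.subset by (simp add: pj_def)
      have Qgrp: "group Q" using KK.factorgroup_is_group by (simp add: Q_def)
      have cQ: "carrier Q = (\<lambda>x. K #> x) ` carrier G" by (simp add: Q_def carrier_FactGroup)
      have cP: "carrier P = (\<lambda>x. N #> x) ` carrier G" by (simp add: P_def carrier_FactGroup)
      have pihom: "pj \<in> hom Q P"
      proof (rule homI)
        fix Xc assume "Xc \<in> carrier Q"
        then obtain x where "x \<in> carrier G" "Xc = K #> x" using cQ by auto
        then show "pj Xc \<in> carrier P" using piK cP by auto
      next
        fix Xc Yc assume "Xc \<in> carrier Q" "Yc \<in> carrier Q"
        then obtain x y where xy: "x \<in> carrier G" "Xc = K #> x" "y \<in> carrier G" "Yc = K #> y" using cQ by auto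
        have "Xc \<otimes>\<^bsub>Q\<^esub> Yc = K #> (x \<otimes> y)" using xy KK.rcos_sum by (simp add: Q_def)
        then have "pj (Xc \<otimes>\<^bsub>Q\<^esub> Yc) = N #> (x \<otimes> y)" using piK xy by simp
        also have "\<dots> = (N #> x) <#> (N #> y)" using NN.rcos_sum xy by simp
        finally show "pj (Xc \<otimes>\<^bsub>Q\<^esub> Yc) = pj Xc \<otimes>\<^bsub>P\<^esub> pj Yc" using piK xy by (simp add: P_def)
      qed
      have pisurj: "pj ` carrier Q = carrier P"
        using piK cP cQ by (auto simp: image_iff)
      define M where "M = {q \<in> carrier Q. pj q = \<one>\<^bsub>P\<^esub>}"
      have Mchar: "M = (\<lambda>n. K #> n) ` N"
      proof
        show "M \<subseteq> (\<lambda>n. K #> n) ` N"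
        proof
          fix q assume "q \<in> M"
          then have q: "q \<in> carrier Q" "pj q = N" by (auto simp: M_def P_def)
          then obtain x where x0: "x \<in> carrier G" "q = K #> x" using cQ by auto
          then have x: "x \<in> carrier G" "q = K #> x" "N #> x = N" using q piK by auto
          then have "x \<in> N" using coset_join1 Nsub by blast
          then show "q \<in> (\<lambda>n. K #> n) ` N" using x by auto
        qed
        show "(\<lambda>n. K #> n) ` N \<subseteq> M"
        proof
          fix q assume "q \<in> (\<lambda>n. K #> n) ` N"
          then obtain n where n: "n \<in> N" "q = K #> n" by auto
          then have "n \<in> carrier G" using NN.subset by auto
          then show "q \<in> M" using n piK cQ coset_join2[OF _ Nsub n(1)] by (auto simp: M_def P_def)
        qed
      qed
      have lf: "\<exists>T. finite T \<and> T \<noteq> {} \<and> T \<subseteq> M \<and> (\<forall>r\<in>R. \<forall>t\<in>T. r \<otimes>\<^bsub>Q\<^esub> t \<in> T)"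
        if R: "finite R" "R \<subseteq> M" for R
      proof -
        define rep where "rep q = (SOME n. n \<in> N \<and> q = K #> n)" for q
        have rep: "rep q \<in> N \<and> q = K #> rep q" if "q \<in> M" for q
          unfolding rep_def by (rule someI_ex) (use that Mchar in auto)
        define R' where "R' = rep ` R"
        have R'fin: "finite R'" using R(1) by (simp add: R'_def)
        have R'N: "R' \<subseteq> N" using rep R(2) by (auto simp: R'_def)
        define W where "W = {ws :: (bool \<times> 'a) list. set (map snd ws) \<subseteq> R'}"
        define T where "T = (\<lambda>ws. K #> eval_word G ws) ` W"
        have evN: "eval_word G ws \<in> N" if "ws \<in> W" for ws
          using eval_in_sub[OF Nsub] that R'N by (auto simp: W_def)
        have evF: "eval_word F ws = eval_word G ws" if "ws \<in> W" for ws
          using eval_sub[OF Nsub] that R'N by (auto simp: W_def F_def)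
        define \<Theta> where "\<Theta> ws = restrict (\<lambda>\<rho>. eval_word Hs (mapw \<rho> ws)) (R' \<rightarrow>\<^sub>E carrier Hs)" for ws
        have finHs: "finite (carrier Hs)"
        proof -
          have "carrier Hs \<subseteq> S0 \<rightarrow>\<^sub>E S0"
            by (auto simp: Hs_def BijGroup_carrier Bij_def bij_betw_def PiE_def Pi_def)
          moreover have "finite (S0 \<rightarrow>\<^sub>E S0)" by (simp add: S0_def finite_PiE)
          ultimately show ?thesis by (rule finite_subset)
        qed
        have \<Theta>in: "\<Theta> ws \<in> (R' \<rightarrow>\<^sub>E carrier Hs) \<rightarrow>\<^sub>E carrier Hs" if w: "ws \<in> W" for ws
        proof -
          have "eval_word Hs (mapw \<rho> ws) \<in> carrier Hs" if rho: "\<rho> \<in> R' \<rightarrow>\<^sub>E carrier Hs" for \<rho>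
          proof -
            have rho': "\<rho> \<in> R' \<rightarrow> carrier Hs" using rho by (simp add: PiE_iff)
            have "set (map snd (mapw \<rho> ws)) \<subseteq> carrier Hs"
              by (rule mapw_carrier[OF rho']) (use w in \<open>simp add: W_def\<close>)
            then show ?thesis by (rule group.eval_carrier[OF Hs])
          qed
          then show ?thesis by (auto simp: \<Theta>_def)
        qed
        have finTh: "finite (\<Theta> ` W)"
        proof (rule finite_subset)
          show "\<Theta> ` W \<subseteq> (R' \<rightarrow>\<^sub>E carrier Hs) \<rightarrow>\<^sub>E carrier Hs" using \<Theta>in by blast
          show "finite ((R' \<rightarrow>\<^sub>E carrier Hs) \<rightarrow>\<^sub>E carrier Hs)" by (intro finite_PiE R'fin finHs)
        qed
        have psiev: "\<psi> (eval_word G ws) = \<Theta> ws (restrict \<psi> R')" if psi: "\<psi> \<in> hom F Hs" and w: "ws \<in> W" for \<psi> ws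
        proof -
          have rin: "restrict \<psi> R' \<in> R' \<rightarrow>\<^sub>E carrier Hs" using psi R'N cF by (auto simp: hom_def)
          have wsN: "set (map snd ws) \<subseteq> carrier F" using w R'N cF by (auto simp: W_def)
          have "\<psi> (eval_word G ws) = \<psi> (eval_word F ws)" using evF[OF w] by simp
          also have "\<dots> = eval_word Hs (mapw \<psi> ws)" by (rule hom_eval[OF F Hs psi wsN])
          also have "\<dots> = eval_word Hs (mapw (restrict \<psi> R') ws)"
            using w by (intro arg_cong[where f="eval_word Hs"] mapw_cong) (auto simp: W_def)
          finally show ?thesis using rin by (simp add: \<Theta>_def)
        qed
        have key: "K #> eval_word G u = K #> eval_word G v" if u: "u \<in> W" and v: "v \<in> W" and th: "\<Theta> u = \<Theta> v" for u v
        proof -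
          define y1 where "y1 = eval_word G u"
          define y2 where "y2 = eval_word G v"
          have y: "y1 \<in> N" "y2 \<in> N" using evN u v by (auto simp: y1_def y2_def)
          have yG: "y1 \<in> carrier G" "y2 \<in> carrier G" using y NN.subset by auto
          have "y1 \<otimes> inv y2 \<in> K"
          proof -
            { fix \<psi> assume psi: "\<psi> \<in> hom F Hs"
              have e: "\<psi> y1 = \<psi> y2" using psiev[OF psi u] psiev[OF psi v] th by (simp add: y1_def y2_def)
              have "\<psi> (y1 \<otimes> inv y2) = \<psi> (y1 \<otimes>\<^bsub>F\<^esub> inv\<^bsub>F\<^esub> y2)" using invF[OF y(2)] multF by simp
              also have "\<dots> = \<psi> y1 \<otimes>\<^bsub>Hs\<^esub> inv\<^bsub>Hs\<^esub> \<psi> y2"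
                using group_hom.hom_mult[OF ghF[OF psi]] group_hom.hom_inv[OF ghF[OF psi]] y cF group.inv_closed[OF F]
                by auto
              also have "\<dots> = \<one>\<^bsub>Hs\<^esub>" using e group.r_inv[OF Hs] psi y cF by (auto simp: hom_def)
              finally have "\<psi> (y1 \<otimes> inv y2) = \<one>\<^bsub>Hs\<^esub>" . }
            moreover have "y1 \<otimes> inv y2 \<in> N" using y NN.m_closed NN.m_inv_closed by auto
            ultimately show ?thesis by (auto simp: K_def)
          qed
          then have "K #> (y1 \<otimes> inv y2) = K" using coset_join2 Ksub yG by auto
          then show ?thesis using coset_mult_inv1[of K y1 y2] yG KK.subset by (simp add: y1_def y2_def)
        qed
        have Tfin: "finite T"
        proof -
          define pick where "pick \<theta> = (SOME ws. ws \<in> W \<and> \<Theta> ws = \<theta>)" for \<theta>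
          have "T \<subseteq> (\<lambda>\<theta>. K #> eval_word G (pick \<theta>)) ` (\<Theta> ` W)"
          proof
            fix t assume "t \<in> T"
            then obtain ws where ws: "ws \<in> W" "t = K #> eval_word G ws" by (auto simp: T_def)
            have p: "pick (\<Theta> ws) \<in> W \<and> \<Theta> (pick (\<Theta> ws)) = \<Theta> ws"
              unfolding pick_def by (rule someI[of _ ws]) (use ws in auto)
            then have "t = K #> eval_word G (pick (\<Theta> ws))" using key[of ws "pick (\<Theta> ws)"] ws by auto
            then show "t \<in> (\<lambda>\<theta>. K #> eval_word G (pick \<theta>)) ` (\<Theta> ` W)" using ws by blast
          qed
          then show ?thesis using finTh finite_subset by blast
        qed
        have nil: "[] \<in> W" by (simp add: W_def)
        show ?thesis
        proof (intro exI[of _ T] conjI ballI)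
          show "finite T" by (rule Tfin)
          show "T \<noteq> {}" using nil by (auto simp: T_def)
          show "T \<subseteq> M" using evN Mchar by (auto simp: T_def)
          fix r t assume r: "r \<in> R" and t: "t \<in> T"
          obtain ws where ws: "ws \<in> W" "t = K #> eval_word G ws" using t by (auto simp: T_def)
          have rr: "rep r \<in> N" "r = K #> rep r" using rep R(2) r by auto
          have rG: "rep r \<in> carrier G" using rr NN.subset by auto
          have eG: "eval_word G ws \<in> carrier G" using evN[OF ws(1)] NN.subset by auto
          have "r \<otimes>\<^bsub>Q\<^esub> t = K #> (rep r \<otimes> eval_word G ws)"
            using rr ws KK.rcos_sum[OF rG eG] by (simp add: Q_def)
          also have "rep r \<otimes> eval_word G ws = eval_word G ((True, rep r) # ws)" by simp
          finally have eqn: "r \<otimes>\<^bsub>Q\<^esub> t = K #> eval_word G ((True, rep r) # ws)" .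
          have "(True, rep r) # ws \<in> W" using ws r by (auto simp: W_def R'_def)
          then have "K #> eval_word G ((True, rep r) # ws) \<in> T" unfolding T_def by (rule imageI)
          then show "r \<otimes>\<^bsub>Q\<^esub> t \<in> T" by (subst eqn)
        qed
      qed
      have MQ: "M \<subseteq> carrier Q" unfolding M_def by (rule subsetI) (erule CollectE, erule conjE)
      have Mne: "M \<noteq> {}" using NN.one_closed unfolding Mchar by blast
      have Mc: "a \<otimes>\<^bsub>Q\<^esub> b \<in> M" if ab: "a \<in> M" "b \<in> M" for a b
      proof -
        obtain x y where xy: "x \<in> N" "a = K #> x" "y \<in> N" "b = K #> y" using ab Mchar by blast
        have xyG: "x \<in> carrier G" "y \<in> carrier G" using xy NN.subset by auto
        have "a \<otimes>\<^bsub>Q\<^esub> b = K #> (x \<otimes> y)" using xy KK.rcos_sum[OF xyG] by (simp add: Q_def)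
        moreover have "x \<otimes> y \<in> N" using xy NN.m_closed by blast
        ultimately show ?thesis using Mchar by blast
      qed
      obtain \<mu> :: "'a set set \<Rightarrow> real" where mu_all: "\<mu> M = 1 \<and> (\<forall>S\<subseteq>M. \<mu> S \<ge> 0) \<and>
         (\<forall>S T. S \<subseteq> M \<longrightarrow> T \<subseteq> M \<longrightarrow> S \<inter> T = {} \<longrightarrow> \<mu> (S \<union> T) = \<mu> S + \<mu> T) \<and>
         (\<forall>m\<in>M. \<forall>S\<subseteq>M. \<mu> (m <#\<^bsub>Q\<^esub> S) = \<mu> S)"
        by (rule exE[OF locfin_measure[OF Qgrp MQ Mne Mc lf]]) assumption
      have mu: "\<mu> M = 1" "\<forall>S\<subseteq>M. \<mu> S \<ge> 0"
         "\<forall>S T. S \<subseteq> M \<longrightarrow> T \<subseteq> M \<longrightarrow> S \<inter> T = {} \<longrightarrow> \<mu> (S \<union> T) = \<mu> S + \<mu> T"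
         "\<forall>m\<in>M. \<forall>S\<subseteq>M. \<mu> (m <#\<^bsub>Q\<^esub> S) = \<mu> S"
        using mu_all by auto
      have amQ: "amenable Q"
        using extension_amenable[OF Qgrp _ pihom pisurj M_def mu] assms(3) by (simp add: P_def)
      have "K #> g \<noteq> K" using gK g coset_join1 Ksub by blast
      then show ?thesis using amQ Qgrp KK.r_coset_hom_Mod g
        by (intro exI[of _ Q] exI[of _ "\<lambda>x. K #> x"]) (auto simp: Q_def carrier_FactGroup)
    qed
  qed
qed

theorem corollary3p4:
  fixes G :: "'a monoid" and N :: "'a set"
  assumes "group G"
    and "N \<lhd> G"
    and "is_free_group (G\<lparr>carrier := N\<rparr>)"
    and "amenable (G Mod N)"
  shows "residually_amenable G"
  using group.main[OF assms] .

end
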